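(* Let $A$ be the $3\times3$ Jordan block with eigenvalue $0$ (ones on the superdiagonal, zeros elsewhere), and let $\Omega$ be the disk centered at the origin of radius $r$ with $0<r\le1$. Parametrize $\partial\Omega$ by arc length as $\sigma(s)=re^{is/r}$, $s\in[0,2\pi r]$, define the Hermitian matrix \[ \mu(\sigma(s),A)=\frac{\sigma'(s)}{2\pi i}(\sigma(s)I-A)^{-1}+\left[\frac{\sigma'(s)}{2\pi i}(\sigma(s)I-A)^{-1}\right]^{*}, \] and set $\delta=-\int_0^{2\pi r}\lambda_{\min}(\mu(\sigma(s),A))\,ds$, where $\lambda_{\min}$ denotes the smallest eigenvalue. Then \[ \max_{f}\frac{\|f(A)\|}{\|f\|_\Omega}=2+\delta, \] the maximum being over all nonzero functions $f$ analytic in $\Omega$ and continuous on its closure, with $\|f\|_\Omega=\sup_{z\in\Omega}|f(z)|$.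
   Context: $\|\cdot\|$ is the matrix 2-norm. *)

theory Defs
  imports "HOL-Analysis.Analysis"
begin

text \<open>The 3x3 Jordan block with eigenvalue 0 (ones on the superdiagonal).
  Indices of type 3 are 0,1,2.\<close>
definition jordan3 :: "complex^3^3" where
  "jordan3 = (\<chi> i j. if Rep_bit1 j = Rep_bit1 i + 1 then 1 else 0)"

definition mat_norm2 :: "complex^'n^'m \<Rightarrow> real" where
  "mat_norm2 M = onorm (\<lambda>x. M *v x)"

definition adjoint_mat :: "complex^'n^'n \<Rightarrow> complex^'n^'n" where
  "adjoint_mat M = (\<chi> i j. cnj (M $ j $ i))"

text \<open>Smallest eigenvalue of a Hermitian matrix (its eigenvalues are real).\<close>
definition lambda_min :: "complex^'n^'n \<Rightarrow> real" where
  "lambda_min M = Inf {x::real. \<exists>v. v \<noteq> 0 \<and> M *v v = complex_of_real x *s v}"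

definition cscale_mat :: "complex \<Rightarrow> complex^'n^'m \<Rightarrow> complex^'n^'m" where
  "cscale_mat c M = (\<chi> i j. c * M $ i $ j)"

definition mat_pow :: "complex^'n^'n \<Rightarrow> nat \<Rightarrow> complex^'n^'n" where
  "mat_pow M k = ((\<lambda>X. M ** X) ^^ k) (mat 1)"

text \<open>Holomorphic functional calculus for the nilpotent Jordan block (spectrum {0},
  index 3): f(A) = sum over k<3 of f^(k)(0)/k! A^k.\<close>
definition fun_jordan3 :: "(complex \<Rightarrow> complex) \<Rightarrow> complex^3^3" where
  "fun_jordan3 f = (\<Sum>k<3. cscale_mat ((deriv ^^ k) f 0 / of_nat (fact k)) (mat_pow jordan3 k))"

definition sigma :: "real \<Rightarrow> real \<Rightarrow> complex" where
  "sigma r s = complex_of_real r * exp (\<i> * complex_of_real (s / r))"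

definition mu_mat :: "real \<Rightarrow> real \<Rightarrow> complex^3^3" where
  "mu_mat r s = (let B = cscale_mat (vector_derivative (sigma r) (at s) / (2 * complex_of_real pi * \<i>))
                          (matrix_inv (cscale_mat (sigma r s) (mat 1) - jordan3))
                 in B + adjoint_mat B)"

definition delta :: "real \<Rightarrow> real" where
  "delta r = - integral {0..2 * pi * r} (\<lambda>s. lambda_min (mu_mat r s))"

definition sup_norm :: "(complex \<Rightarrow> complex) \<Rightarrow> complex set \<Rightarrow> real" where
  "sup_norm f S = (SUP z\<in>S. norm (f z))"

end

theory Submission
  imports Defs "HOL-Complex_Analysis.Cauchy_Integral_Formula"
begin
lemma R: "Rep_bit1 (0::3) = 0" "Rep_bit1 (1::3) = 1" "Rep_bit1 (2::3) = 2" "Rep_bit1 (3::3) = 0"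
  by (simp_all add: bit1.Rep_0 bit1.Rep_1 bit1.Rep_numeral)
lemma J_entries: "jordan3 $ i $ j = (if (i = 0 \<and> j = 1) \<or> (i = 1 \<and> j = 2) then 1 else 0)"
  using exhaust_3[of i] exhaust_3[of j] by (auto simp: jordan3_def R)

lemma three: "(3::3) = 0" by simp

lemma matrix_inv_eq:
  fixes A B :: "'a::comm_ring_1^'n^'n"
  assumes "A ** B = mat 1" "B ** A = mat 1"
  shows "matrix_inv A = B"
proof -
  have ex: "\<exists>A'. A ** A' = mat 1 \<and> A' ** A = mat 1" using assms by blast
  define C where "C = matrix_inv A"
  have C: "A ** C = mat 1" "C ** A = mat 1"
    using someI_ex[OF ex] unfolding C_def matrix_inv_def by auto
  have "C = C ** (A ** B)" by (simp add: assms)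
  also have "\<dots> = (C ** A) ** B" by (simp add: matrix_mul_assoc)
  also have "\<dots> = B" by (simp add: C)
  finally show ?thesis by (simp add: C_def)
qed

lemma sigma_deriv:
  assumes "0 < r"
  shows "vector_derivative (sigma r) (at s) = \<i> * exp (\<i> * of_real (s / r))"
proof -
  have "((\<lambda>z. of_real r * exp (\<i> * (z / of_real r))) has_field_derivative
          (of_real r * (exp (\<i> * (of_real s / of_real r)) * (\<i> / of_real r)))) (at (of_real s))"
    by (auto intro!: derivative_eq_intros)
  then have "((\<lambda>x. of_real r * exp (\<i> * (of_real x / of_real r))) has_vector_derivative (of_real r * (exp (\<i> * (of_real s / of_real r)) * (\<i> / of_real r)))) (at s)"
    by (rule has_vector_derivative_real_field)
  moreover have "sigma r = (\<lambda>x. of_real r * exp (\<i> * (of_real x / of_real r)))"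
    by (auto simp: sigma_def)
  ultimately have "(sigma r has_vector_derivative (of_real r * (exp (\<i> * (of_real s / of_real r)) * (\<i> / of_real r)))) (at s)"
    by simp
  then have "vector_derivative (sigma r) (at s) = of_real r * (exp (\<i> * (of_real s / of_real r)) * (\<i> / of_real r))"
    by (rule vector_derivative_at)
  then show ?thesis using assms by simp
qed
definition mu_ex :: "real \<Rightarrow> complex \<Rightarrow> complex^3^3" where
 "mu_ex r e = (\<chi> i j. if i = j then of_real (1/(pi*r))
     else if (i=0 \<and> j=1) \<or> (i=1 \<and> j=2) then of_real (1/(2*pi*r^2)) * cnj e
     else if (i=1 \<and> j=0) \<or> (i=2 \<and> j=1) then of_real (1/(2*pi*r^2)) * e
     else if i=0 \<and> j=2 then of_real (1/(2*pi*r^3)) * cnj e ^ 2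
     else of_real (1/(2*pi*r^3)) * e ^ 2)"

lemma mu_mat_eq:
  assumes r: "0 < r"
  shows "mu_mat r s = mu_ex r (exp (\<i> * of_real (s / r)))"
proof -
  define e where "e = exp (\<i> * of_real (s / r))"
  have enz: "e \<noteq> 0" by (simp add: e_def)
  have ce: "cnj e = 1 / e"
  proof -
    have "e * cnj e = 1"
      using complex_norm_square[of e] by (simp add: e_def norm_exp_eq_Re)
    then show ?thesis using enz by (simp add: field_simps)
  qed
  define \<sigma> where "\<sigma> = sigma r s"
  have sig: "\<sigma> = of_real r * e" by (simp add: \<sigma>_def sigma_def e_def)
  have snz: "\<sigma> \<noteq> 0" using r enz by (simp add: sig)
  define N :: "complex^3^3" where "N = cscale_mat \<sigma> (mat 1) - jordan3"
  define Ni :: "complex^3^3" where "Ni = (\<chi> i j. if i = j then 1/\<sigma> else if (i=0 \<and> j=1) \<or> (i=1 \<and> j=2) then 1/\<sigma>^2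
       else if i=0 \<and> j=2 then 1/\<sigma>^3 else 0)"
  have N1: "N ** Ni = mat 1"
    unfolding vec_eq_iff forall_3
    using snz by (simp add: N_def Ni_def matrix_matrix_mult_def sum_3 cscale_mat_def mat_def J_entries field_simps power2_eq_square power3_eq_cube)
  have N2: "Ni ** N = mat 1"
    unfolding vec_eq_iff forall_3
    using snz by (simp add: N_def Ni_def matrix_matrix_mult_def sum_3 cscale_mat_def mat_def J_entries field_simps power2_eq_square power3_eq_cube)
  have inv: "matrix_inv N = Ni" by (rule matrix_inv_eq[OF N1 N2])
  have vd: "vector_derivative (sigma r) (at s) / (2 * complex_of_real pi * \<i>) = e / (2 * of_real pi)"
    by (simp add: sigma_deriv[OF r] e_def)
  have e2: "exp (\<i> * of_real s / of_real r) = e" by (simp add: e_def)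
  show ?thesis
    unfolding mu_mat_def Let_def vd inv[unfolded N_def \<sigma>_def] mu_ex_def[of r, folded e_def]
    unfolding vec_eq_iff forall_3
    using enz r by (simp add: Ni_def[unfolded \<sigma>_def] adjoint_mat_def cscale_mat_def sig[unfolded \<sigma>_def] ce e2 field_simps power2_eq_square power3_eq_cube)
qed
lemma quad_id:
  fixes e ce R B v0 v1 v2 cv0 cv1 cv2 :: complex
  assumes "e * ce = 1"
  shows "cv0 * (2*R^2*B * v0 + R*B * ce * v1 + B * ce^2 * v2) + cv1 * (R*B * e * v0 + 2*R^2*B * v1 + R*B * ce * v2)
       + cv2 * (B * e^2 * v0 + R*B * e * v1 + 2*R^2*B * v2)
     = (2*R^2*B - B) * (cv0* v0 + cv1* v1 + cv2* v2)
       + B * ((cv0 + R*e* cv1 + e^2* cv2) * (v0 + R*ce* v1 + ce^2* v2) + (1 - R^2) * ((e* cv1) * (ce* v1)))"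
  using assms by algebra

lemma mu_ex_mv:
  assumes r: "0 < r"
  defines "B \<equiv> complex_of_real (1/(2*pi*r^3))" and "Rc \<equiv> complex_of_real r"
  shows "(mu_ex r e *v v) $ 0 = 2*Rc^2*B * v$0 + Rc*B * cnj e * v$1 + B * cnj e^2 * v$2"
    "(mu_ex r e *v v) $ 1 = Rc*B * e * v$0 + 2*Rc^2*B * v$1 + Rc*B * cnj e * v$2"
    "(mu_ex r e *v v) $ 2 = B * e^2 * v$0 + Rc*B * e * v$1 + 2*Rc^2*B * v$2"
  using r by (simp_all add: three mu_ex_def matrix_vector_mult_def sum_3 B_def Rc_def field_simps power2_eq_square power3_eq_cube)

lemma mu_ex_min:
  assumes r: "0 < r" "r \<le> 1" and e: "e * cnj e = 1"
  shows "lambda_min (mu_ex r e) = 1/(pi*r) - 1/(2*pi*r^3)"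
proof -
  define B where "B = complex_of_real (1/(2*pi*r^3))"
  define Rc where "Rc = complex_of_real r"
  note mv = mu_ex_mv[OF r(1), folded B_def Rc_def]
  have d: "2*Rc^2*B - B = of_real (1/(pi*r) - 1/(2*pi*r^3))"
    using r by (simp add: B_def Rc_def field_simps power2_eq_square power3_eq_cube)
  define m where "m = 1/(pi*r) - 1/(2*pi*r^3)"
  define w :: "complex^3" where "w = (\<chi> i. if i = 0 then 1 else if i = 2 then -(e^2) else 0)"
  have w0: "w $ 0 = 1" "w $ 1 = 0" "w $ 2 = -(e^2)" by (simp_all add: w_def)
  have "mu_ex r e *v w = of_real m *s w"
    unfolding vec_eq_iff forall_3 three
  proof (intro conjI)
    have ce2: "cnj e ^ 2 * e ^ 2 = 1" using e by (metis mult.commute power_mult_distrib power_one)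
    show "(mu_ex r e *v w) $ 1 = (of_real m *s w) $ 1"
      using e by (simp add: mv w0 field_simps power2_eq_square) 
    show "(mu_ex r e *v w) $ 2 = (of_real m *s w) $ 2"
    proof -
      have "(mu_ex r e *v w) $ 2 = -((2*Rc^2*B - B) * e^2)" by (simp add: mv w0 algebra_simps)
      then have "(mu_ex r e *v w) $ 2 = -(of_real m * e^2)" unfolding d m_def .
      then show ?thesis by (simp add: w0)
    qed
    show "(mu_ex r e *v w) $ 0 = (of_real m *s w) $ 0"
    proof -
      have "(mu_ex r e *v w) $ 0 = 2*Rc^2*B - B * (cnj e ^ 2 * e ^ 2)" by (simp add: mv w0 algebra_simps)
      then have "(mu_ex r e *v w) $ 0 = 2*Rc^2*B - B" unfolding ce2 by simp
      then have "(mu_ex r e *v w) $ 0 = of_real m" unfolding d m_def .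
      then show ?thesis by (simp add: w0)
    qed
  qed
  moreover have "w \<noteq> 0" using w0 by (metis zero_index zero_neq_one)
  ultimately have mem: "m \<in> {x::real. \<exists>v. v \<noteq> 0 \<and> mu_ex r e *v v = complex_of_real x *s v}" by blast
  have low: "m \<le> x" if "x \<in> {x::real. \<exists>v. v \<noteq> 0 \<and> mu_ex r e *v v = complex_of_real x *s v}" for x
  proof -
    from that obtain v where v: "v \<noteq> 0" "mu_ex r e *v v = complex_of_real x *s v" by blast
    define W where "W = v$0 + Rc * cnj e * v$1 + cnj e ^2 * v$2"
    have cW: "cnj W = cnj (v$0) + Rc * e * cnj (v$1) + e^2 * cnj (v$2)"
      by (simp add: W_def Rc_def)
    have lhs: "cnj (v$0) * (mu_ex r e *v v)$0 + cnj (v$1) * (mu_ex r e *v v)$1 + cnj (v$2) * (mu_ex r e *v v)$2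
       = of_real x * (cnj (v$0) * v$0 + cnj (v$1) * v$1 + cnj (v$2) * v$2)"
      using v(2) by (simp add: algebra_simps)
    define U where "U = cnj e * v$1"
    have rhs: "cnj (v$0) * (mu_ex r e *v v)$0 + cnj (v$1) * (mu_ex r e *v v)$1 + cnj (v$2) * (mu_ex r e *v v)$2
       = (2*Rc^2*B - B) * (cnj (v$0) * v$0 + cnj (v$1) * v$1 + cnj (v$2) * v$2)
         + B * (cnj W * W + (1 - Rc^2) * (cnj U * U))"
      unfolding mv cW W_def U_def using quad_id[OF e, of "cnj (v$0)" Rc B "v$0" "v$1" "v$2" "cnj (v$1)" "cnj (v$2)"]
      by (simp add: Rc_def)
    have h: "cnj z * z = of_real ((norm z)^2)" for z :: complex
      using complex_norm_square[of z] by (simp add: mult.commute)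
    define n where "n = (norm (v$0))^2 + (norm (v$1))^2 + (norm (v$2))^2"
    have npos: "n > 0"
    proof -
      have "\<exists>i. v $ i \<noteq> 0" using v(1) by (metis vec_eq_iff zero_index)
      then obtain i where "v $ i \<noteq> 0" by blast
      then have "v$0 \<noteq> 0 \<or> v$1 \<noteq> 0 \<or> v$2 \<noteq> 0" using exhaust_3[of i] three by auto
      moreover have "0 \<le> (norm (v$k))^2" for k by simp
      moreover have "v$k \<noteq> 0 \<Longrightarrow> 0 < (norm (v$k))^2" for k by simp
      ultimately show ?thesis unfolding n_def
        by (smt (verit))
    qed
    define b where "b = 1/(2*pi*r^3)"
    have Bb: "B = of_real b" by (simp add: B_def b_def)
    have eqc: "of_real x * (cnj (v$0) * v$0 + cnj (v$1) * v$1 + cnj (v$2) * v$2)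
        = of_real m * (cnj (v$0) * v$0 + cnj (v$1) * v$1 + cnj (v$2) * v$2) + B * (cnj W * W + (1 - Rc^2) * (cnj U * U))"
      using lhs rhs unfolding d m_def by simp
    have "complex_of_real (x * n) = complex_of_real (m * n + b * ((norm W)^2 + (1 - r^2) * (norm U)^2))"
      using eqc by (simp only: h n_def Bb Rc_def of_real_mult of_real_add of_real_diff of_real_power of_real_1)
    then have eq: "x * n = m * n + b * ((norm W)^2 + (1 - r^2) * (norm U)^2)"
      using of_real_eq_iff by blast
    have "0 \<le> b * ((norm W)^2 + (1 - r^2) * (norm U)^2)"
      using r unfolding b_def by (intro mult_nonneg_nonneg add_nonneg_nonneg) (simp_all add: power_le_one)
    then have "m * n \<le> x * n" using eq by linarith
    then show ?thesis using npos by simp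
  qed
  show ?thesis unfolding lambda_min_def m_def[symmetric]
    by (rule cInf_eq_minimum[OF mem low])
qed
lemma delta_val:
  assumes r: "0 < r" "r \<le> 1"
  shows "delta r = 1 / r^2 - 2"
proof -
  have lm: "lambda_min (mu_mat r s) = 1/(pi*r) - 1/(2*pi*r^3)" for s
  proof -
    define e where "e = exp (\<i> * of_real (s / r))"
    have "e * cnj e = 1"
      using complex_norm_square[of e] by (simp add: e_def norm_exp_eq_Re)
    then show ?thesis unfolding mu_mat_eq[OF r(1)] e_def[symmetric] by (rule mu_ex_min[OF r])
  qed
  have "integral {0..2 * pi * r} (\<lambda>s. lambda_min (mu_mat r s)) = integral {0..2 * pi * r} (\<lambda>s. 1/(pi*r) - 1/(2*pi*r^3))"
    by (simp add: lm)
  also have "\<dots> = (2 * pi * r) * (1/(pi*r) - 1/(2*pi*r^3))"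
    using r by (simp add: integral_const_real)
  also have "\<dots> = 2 - 1/r^2"
    using r by (simp add: field_simps power2_eq_square power3_eq_cube)
  finally show ?thesis by (simp add: delta_def)
qed
lemma J2_entries: "(jordan3 ** jordan3) $ i $ j = (if i = 0 \<and> j = 2 then 1 else 0)"
  using exhaust_3[of i] exhaust_3[of j] by (auto simp: matrix_matrix_mult_def J_entries sum_3)

lemma F_entries: "fun_jordan3 f $ i $ j =
   (if i = j then (deriv ^^ 0) f 0 else if (i = 0 \<and> j = 1) \<or> (i = 1 \<and> j = 2) then (deriv ^^ 1) f 0
    else if i = 0 \<and> j = 2 then (deriv ^^ 2) f 0 / 2 else 0)"
proof -
  have p0: "mat_pow jordan3 0 = mat 1" by (simp add: mat_pow_def)
  have p1: "mat_pow jordan3 (Suc 0) = jordan3" by (simp add: mat_pow_def)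
  have p2: "mat_pow jordan3 2 = jordan3 ** jordan3" by (simp add: mat_pow_def numeral_2_eq_2)
  have "fun_jordan3 f $ i $ j = (\<Sum>k<3. (deriv ^^ k) f 0 / of_nat (fact k) * (mat_pow jordan3 k) $ i $ j)"
    by (simp add: fun_jordan3_def cscale_mat_def)
  also have "\<dots> = (deriv ^^ 0) f 0 * (mat 1 :: complex^3^3) $ i $ j + (deriv ^^ 1) f 0 * jordan3 $ i $ j
       + (deriv ^^ 2) f 0 / 2 * (jordan3 ** jordan3) $ i $ j"
    proof -
      have u: "{..<3::nat} = {0,1,2}" by auto
      show ?thesis by (simp add: u p0 p1 p2 del: funpow.simps)
    qed
  finally show ?thesis
    using exhaust_3[of i] exhaust_3[of j]
    by (auto simp: J_entries J2_entries mat_def simp del: funpow.simps)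
qed

definition EE :: "real \<Rightarrow> complex" where "EE t = exp (2 * of_real pi * \<i> * of_real t)"

lemma EE_cnj: "cnj (EE t) = 1 / EE t"
proof -
  have "EE t * cnj (EE t) = 1"
    using complex_norm_square[of "EE t"] by (simp add: EE_def norm_exp_eq_Re)
  moreover have "EE t \<noteq> 0" by (simp add: EE_def)
  ultimately show ?thesis by (simp add: field_simps)
qed

lemma EE_nz: "EE t \<noteq> 0" by (simp add: EE_def)

lemma exp_int0:
  fixes c :: complex
  assumes "c \<noteq> 0" "exp c = 1"
  shows "((\<lambda>t. exp (c * of_real t)) has_integral 0) {0..1::real}"
proof -
  have "((\<lambda>t. c * exp (c * of_real t)) has_integral (exp (c * of_real 1) - exp (c * of_real 0))) {0..1::real}"
  proof (rule fundamental_theorem_of_calculus)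
    fix x :: real assume "x \<in> {0..1}"
    have "((\<lambda>z. exp (c * z)) has_field_derivative c * exp (c * of_real x)) (at (of_real x))"
      by (auto intro!: derivative_eq_intros)
    then show "((\<lambda>t. exp (c * of_real t)) has_vector_derivative c * exp (c * of_real x)) (at x within {0..1})"
      by (rule has_vector_derivative_real_field)
  qed simp
  then have "((\<lambda>t. c * exp (c * of_real t)) has_integral 0) {0..1::real}" using assms by simp
  then show ?thesis using has_integral_mult_right_iff[OF assms(1), of "\<lambda>t. exp (c * of_real t)" 0 "{0..1}"] by simp
qed

lemma EE_pow_int:
  assumes "k \<in> {1,2::nat}"
  shows "((\<lambda>t. EE t ^ k) has_integral 0) {0..1}" "((\<lambda>t. cnj (EE t) ^ k) has_integral 0) {0..1}"
proof -
  have e1: "exp (2 * of_real pi * \<i> * of_nat k) = 1"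
    using exp_integer_2pi[of "of_nat k"] by (simp add: mult.commute mult.left_commute)
  have e2: "exp (- (2 * of_real pi * \<i> * of_nat k)) = 1"
    using e1 by (simp add: exp_minus)
  have nz: "2 * of_real pi * \<i> * of_nat k \<noteq> (0::complex)" using assms by auto
  have "((\<lambda>t. exp ((2 * of_real pi * \<i> * of_nat k) * of_real t)) has_integral 0) {0..1}"
    by (rule exp_int0[OF nz e1])
  moreover have "\<And>t. EE t ^ k = exp ((2 * of_real pi * \<i> * of_nat k) * of_real t)"
    by (simp add: EE_def exp_of_nat_mult[symmetric] mult_ac)
  ultimately show "((\<lambda>t. EE t ^ k) has_integral 0) {0..1}" by simp
  have "((\<lambda>t. exp ((- (2 * of_real pi * \<i> * of_nat k)) * of_real t)) has_integral 0) {0..1}"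
    by (rule exp_int0) (use nz e2 in auto)
  moreover have "\<And>t. cnj (EE t) ^ k = exp ((- (2 * of_real pi * \<i> * of_nat k)) * of_real t)"
    by (simp add: EE_def exp_cnj exp_of_nat_mult[symmetric] mult_ac)
  ultimately show "((\<lambda>t. cnj (EE t) ^ k) has_integral 0) {0..1}" by simp
qed

lemma trig_int:
  "((\<lambda>t. c0 + c1 * EE t + c2 * EE t ^ 2 + d1 * cnj (EE t) + d2 * cnj (EE t) ^ 2) has_integral c0) {0..1}"
proof -
  have a: "((\<lambda>t. c0) has_integral c0) {0..1::real}"
    using has_integral_const_real[of c0 0 1] by simp
  have i1: "((\<lambda>t. EE t) has_integral 0) {0..1}" using EE_pow_int(1)[of 1] by simp
  have i2: "((\<lambda>t. EE t ^ 2) has_integral 0) {0..1}" using EE_pow_int(1)[of 2] by simp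
  have j1: "((\<lambda>t. cnj (EE t)) has_integral 0) {0..1}" using EE_pow_int(2)[of 1] by simp
  have j2: "((\<lambda>t. cnj (EE t) ^ 2) has_integral 0) {0..1}" using EE_pow_int(2)[of 2] by simp
  have "((\<lambda>t. c0 + c1 * EE t + c2 * EE t ^ 2 + d1 * cnj (EE t) + d2 * cnj (EE t) ^ 2) has_integral
        (c0 + c1 * 0 + c2 * 0 + d1 * 0 + d2 * 0)) {0..1}"
    by (intro has_integral_add has_integral_mult_right a i1 i2 j1 j2)
  then show ?thesis by simp
qed
lemma circ_int:
  assumes "(g has_contour_integral I) (circlepath 0 r)"
  shows "((\<lambda>t. g (of_real r * EE t) * (2 * of_real pi * \<i> * of_real r * EE t)) has_integral I) {0..1}"
  using assms unfolding has_contour_integral_def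
proof (rule has_integral_eq[rotated])
  fix t :: real assume "t \<in> {0..1}"
  then have "vector_derivative (circlepath 0 r) (at t within {0..1}) = 2 * of_real pi * \<i> * of_real r * EE t"
    by (simp add: vector_derivative_circlepath01 EE_def)
  moreover have "circlepath 0 r t = of_real r * EE t" by (simp add: circlepath EE_def)
  ultimately show "g (circlepath 0 r t) * vector_derivative (circlepath 0 r) (at t within {0..1}) =
     g (of_real r * EE t) * (2 * of_real pi * \<i> * of_real r * EE t)" by simp
qed

lemma cauchy_coef:
  assumes "continuous_on (cball 0 r) f" "f holomorphic_on ball 0 r" "0 < r"
  shows "((\<lambda>t. f (of_real r * EE t) / (of_real r * EE t) ^ Suc k * (2 * of_real pi * \<i> * of_real r * EE t))
     has_integral (2 * of_real pi * \<i> / fact k * (deriv ^^ k) f 0)) {0..1}"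
proof -
  have "((\<lambda>u. f u / (u - 0) ^ Suc k) has_contour_integral ((2 * pi * \<i>) / (fact k) * (deriv ^^ k) f 0))
           (circlepath 0 r)"
    by (rule Cauchy_has_contour_integral_higher_derivative_circlepath) (use assms in auto)
  from circ_int[OF this] show ?thesis by simp
qed

lemma cauchy_zero:
  assumes "continuous_on (cball 0 r) f" "f holomorphic_on ball 0 r" "0 < r"
  shows "((\<lambda>t. f (of_real r * EE t) * (of_real r * EE t) ^ m * (2 * of_real pi * \<i> * of_real r * EE t))
     has_integral 0) {0..1}"
proof -
  define h where "h u = f u * u ^ Suc m" for u
  have "((\<lambda>u. h u / (u - 0) ^ Suc 0) has_contour_integral ((2 * pi * \<i>) / (fact 0) * (deriv ^^ 0) h 0))
           (circlepath 0 r)"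
    by (rule Cauchy_has_contour_integral_higher_derivative_circlepath)
       (use assms in \<open>auto simp: h_def intro!: continuous_intros holomorphic_intros\<close>)
  from circ_int[OF this] have "((\<lambda>t. h (of_real r * EE t) / (of_real r * EE t) * (2 * of_real pi * \<i> * of_real r * EE t))
     has_integral 0) {0..1}" by (simp add: h_def)
  then show ?thesis
    by (rule has_integral_eq[rotated]) (use assms EE_nz in \<open>simp add: h_def\<close>)
qed
lemma poly_id:
  fixes e R y0 y1 y2 x0 x1 x2 cy0 cy1 cy2 cx0 cx1 cx2 :: complex
  assumes "e \<noteq> 0"
  shows "(cy0 + cy1 * R * e + cy2 * R^2 * e^2) * (y0 + y1 * R * (1/e) + y2 * R^2 * (1/e)^2)
       + (cx0 * R^2 + cx1 * R * e + cx2 * e^2) * (x0 * R^2 + x1 * R * (1/e) + x2 * (1/e)^2)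
     = (cy0*y0 + cy1*y1*R^2 + cy2 * y2 * R^4 + cx0 * x0 * R^4 + cx1*x1*R^2 + cx2 * x2)
     + (cy1*y0*R + cy2*y1*R^3 + cx1 * x0 * R^3 + cx2 * x1 * R) * e
     + (cy2*y0*R^2 + cx2*x0*R^2) * e^2
     + (cy0*y1*R + cy1*y2*R^3 + cx0*x1*R^3 + cx1*x2*R) * (1/e)
     + (cy0*y2*R^2 + cx0 * x2 * R^2) * (1/e)^2"
  using assms by (simp add: field_simps) algebra

lemma key_bound:
  fixes x0 x1 x2 y0 y1 y2 :: complex
  assumes cont: "continuous_on (cball 0 r) f" and hol: "f holomorphic_on ball 0 r" and r: "0 < r" "r \<le> 1"
    and M: "\<And>w. w \<in> cball 0 r \<Longrightarrow> norm (f w) \<le> M"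
  shows "norm (cnj y0 * ((deriv ^^ 0) f 0 * x0 + (deriv ^^ 1) f 0 * x1 + (deriv ^^ 2) f 0 / 2 * x2)
             + cnj y1 * ((deriv ^^ 0) f 0 * x1 + (deriv ^^ 1) f 0 * x2) + cnj y2 * ((deriv ^^ 0) f 0 * x2))
         \<le> M / (2 * r^2) * ((norm y0)^2 + (norm y1)^2 + (norm y2)^2 + (norm x0)^2 + (norm x1)^2 + (norm x2)^2)"
proof -
  define D0 where "D0 = (deriv ^^ 0) f 0"
  define D1 where "D1 = (deriv ^^ 1) f 0"
  define D2 where "D2 = (deriv ^^ 2) f 0"
  define q0 where "q0 = cnj y0 * x0 + cnj y1 * x1 + cnj y2 * x2"
  define q1 where "q1 = cnj y0 * x1 + cnj y1 * x2"
  define q2 where "q2 = cnj y0 * x2"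
  define qm1 where "qm1 = cnj y1 * x0 + cnj y2 * x1"
  define qm2 where "qm2 = cnj y2 * x0"
  define S where "S = cnj y0 * (D0 * x0 + D1 * x1 + D2 / 2 * x2) + cnj y1 * (D0 * x1 + D1 * x2) + cnj y2 * (D0 * x2)"
  define c :: complex where "c = 2 * of_real pi * \<i>"
  define R :: complex where "R = of_real r"
  have cnz: "c \<noteq> 0" by (simp add: c_def)
  have Rnz: "R \<noteq> 0" using r by (simp add: R_def)
  have S_eq: "S = q0 * D0 + q1 * D1 + q2 * D2 / 2"
    by (simp add: S_def q0_def q1_def q2_def algebra_simps)
  note cc = cauchy_coef[OF cont hol r(1)] and cz = cauchy_zero[OF cont hol r(1)]
  have "((\<lambda>t. q0 * (f (R * EE t) / (R * EE t) ^ Suc 0 * (c * R * EE t))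
           + q1 * (f (R * EE t) / (R * EE t) ^ Suc 1 * (c * R * EE t))
           + q2 * (f (R * EE t) / (R * EE t) ^ Suc 2 * (c * R * EE t))
           + qm1 * (f (R * EE t) * (R * EE t) ^ 0 * (c * R * EE t))
           + qm2 * (f (R * EE t) * (R * EE t) ^ 1 * (c * R * EE t)))
       has_integral (q0 * (c / fact 0 * D0) + q1 * (c / fact 1 * D1) + q2 * (c / fact 2 * D2) + qm1 * 0 + qm2 * 0)) {0..1}"
    unfolding c_def R_def D0_def D1_def D2_def
    by (intro has_integral_add has_integral_mult_right cc cz)
  then have "((\<lambda>t. (1/c) * (q0 * (f (R * EE t) / (R * EE t) ^ Suc 0 * (c * R * EE t))
           + q1 * (f (R * EE t) / (R * EE t) ^ Suc 1 * (c * R * EE t))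
           + q2 * (f (R * EE t) / (R * EE t) ^ Suc 2 * (c * R * EE t))
           + qm1 * (f (R * EE t) * (R * EE t) ^ 0 * (c * R * EE t))
           + qm2 * (f (R * EE t) * (R * EE t) ^ 1 * (c * R * EE t))))
       has_integral ((1/c) * (q0 * (c / fact 0 * D0) + q1 * (c / fact 1 * D1) + q2 * (c / fact 2 * D2) + qm1 * 0 + qm2 * 0))) {0..1}"
    by (rule has_integral_mult_right)
  moreover have "(1/c) * (q0 * (c / fact 0 * D0) + q1 * (c / fact 1 * D1) + q2 * (c / fact 2 * D2) + qm1 * 0 + qm2 * 0) = S"
    using cnz by (simp add: S_eq field_simps)
  ultimately have "((\<lambda>t. (1/c) * (q0 * (f (R * EE t) / (R * EE t) ^ Suc 0 * (c * R * EE t))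
           + q1 * (f (R * EE t) / (R * EE t) ^ Suc 1 * (c * R * EE t))
           + q2 * (f (R * EE t) / (R * EE t) ^ Suc 2 * (c * R * EE t))
           + qm1 * (f (R * EE t) * (R * EE t) ^ 0 * (c * R * EE t))
           + qm2 * (f (R * EE t) * (R * EE t) ^ 1 * (c * R * EE t))))
       has_integral S) {0..1}" by simp
  then have GS: "((\<lambda>t. f (R * EE t) * (q0 + q1 / (R * EE t) + q2 / (R * EE t)^2 + qm1 * (R * EE t) + qm2 * (R * EE t)^2))
       has_integral S) {0..1}"
    by (rule has_integral_eq[rotated]) (use cnz Rnz EE_nz in \<open>simp add: field_simps power2_eq_square power3_eq_cube\<close>)
  define Yt where "Yt t = y0 + y1 * R * cnj (EE t) + y2 * R^2 * cnj (EE t)^2" for t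
  define Xt where "Xt t = x0 * R^2 + x1 * R * cnj (EE t) + x2 * cnj (EE t)^2" for t
  define Pb where "Pb t = q0 + q1 / (R * EE t) + q2 / (R * EE t)^2 + qm1 * (R * EE t) + qm2 * (R * EE t)^2" for t
  have cR: "cnj R = R" by (simp add: R_def)
  have P1: "R^2 * Pb t = cnj (Yt t) * Xt t" for t
  proof -
    have ce: "cnj (EE t) = 1 / EE t" by (rule EE_cnj)
    have "cnj (Yt t) = cnj y0 + cnj y1 * R * EE t + cnj y2 * R^2 * EE t ^ 2"
      by (simp add: Yt_def cR)
    then show ?thesis using EE_nz[of t] Rnz
      by (simp add: Xt_def Pb_def ce q0_def q1_def q2_def qm1_def qm2_def field_simps power2_eq_square)
  qed
  define c0 where "c0 = cnj y0*y0 + cnj y1*y1*R^2 + cnj y2 * y2 * R^4 + cnj x0 * x0 * R^4 + cnj x1*x1*R^2 + cnj x2 * x2"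
  define c1 where "c1 = cnj y1*y0*R + cnj y2*y1*R^3 + cnj x1 * x0 * R^3 + cnj x2 * x1 * R"
  define c2 where "c2 = cnj y2*y0*R^2 + cnj x2*x0*R^2"
  define d1 where "d1 = cnj y0*y1*R + cnj y1*y2*R^3 + cnj x0*x1*R^3 + cnj x1*x2*R"
  define d2 where "d2 = cnj y0*y2*R^2 + cnj x0 * x2 * R^2"
  have Z: "cnj (Yt t) * Yt t + cnj (Xt t) * Xt t = c0 + c1 * EE t + c2 * EE t ^ 2 + d1 * cnj (EE t) + d2 * cnj (EE t) ^ 2" for t
  proof -
    have ce: "cnj (EE t) = 1 / EE t" by (rule EE_cnj)
    have "cnj (Yt t) = cnj y0 + cnj y1 * R * EE t + cnj y2 * R^2 * EE t ^ 2"
      by (simp add: Yt_def cR)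
    moreover have "cnj (Xt t) = cnj x0 * R^2 + cnj x1 * R * EE t + cnj x2 * EE t ^ 2"
      by (simp add: Xt_def cR)
    ultimately show ?thesis using poly_id[OF EE_nz[of t], of "cnj y0" "cnj y1" R "cnj y2" y0 y1 y2 "cnj x0" "cnj x1" "cnj x2" x0 x1 x2]
      by (simp only: Xt_def Yt_def ce c0_def c1_def c2_def d1_def d2_def)
  qed
  have nsq: "Re (cnj z * z) = (norm z)^2" for z :: complex
    using complex_norm_square[of z] by (metis Re_complex_of_real mult.commute)
  have Mnn: "0 \<le> M" using M[of 0] r by (smt (verit) centre_in_cball norm_ge_zero)
  define g where "g t = M / (2 * r^2) * Re (cnj (Yt t) * Yt t + cnj (Xt t) * Xt t)" for t
  have Zint: "((\<lambda>t. cnj (Yt t) * Yt t + cnj (Xt t) * Xt t) has_integral c0) {0..1}"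
    unfolding Z by (rule trig_int)
  have gint: "(g has_integral (M / (2 * r^2) * Re c0)) {0..1}"
    unfolding g_def
    using has_integral_mult_right[OF has_integral_linear[OF Zint bounded_linear_Re], of "M / (2 * r^2)"]
    by (simp only: o_def)
  have bound: "norm (f (R * EE t) * Pb t) \<le> g t" if "t \<in> {0..1}" for t
  proof -
    have nE: "norm (EE t) = 1" by (simp add: EE_def norm_exp_eq_Re)
    have "norm (f (R * EE t)) \<le> M" using r by (intro M) (simp add: R_def norm_mult nE)
    have "norm (R^2 * Pb t) = r^2 * norm (Pb t)" using r by (simp add: R_def norm_mult norm_power)
    then have "r^2 * norm (Pb t) = norm (cnj (Yt t) * Xt t)" using P1[of t] by simp
    also have "norm (cnj (Yt t) * Xt t) \<le> ((norm (Yt t))^2 + (norm (Xt t))^2) / 2"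
      using sum_squares_bound[of "norm (Yt t)" "norm (Xt t)"] by (simp add: norm_mult)
    also have "\<dots> = Re (cnj (Yt t) * Yt t + cnj (Xt t) * Xt t) / 2" by (simp only: plus_complex.sel nsq)
    finally have h1: "r^2 * norm (Pb t) \<le> Re (cnj (Yt t) * Yt t + cnj (Xt t) * Xt t) / 2" .
    have "norm (f (R * EE t) * Pb t) \<le> M * norm (Pb t)"
      by (simp add: norm_mult) (rule mult_right_mono; use \<open>norm (f (R * EE t)) \<le> M\<close> in simp)
    also have "\<dots> \<le> M * (Re (cnj (Yt t) * Yt t + cnj (Xt t) * Xt t) / 2 / r^2)"
      using h1 r Mnn by (intro mult_left_mono) (simp_all add: field_simps)
    also have "\<dots> = g t" by (simp add: g_def field_simps)
    finally show ?thesis .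
  qed
  have "norm (integral {0..1} (\<lambda>t. f (R * EE t) * Pb t)) \<le> integral {0..1} g"
    by (rule integral_norm_bound_integral) (use GS gint bound in \<open>auto simp: Pb_def\<close>)
  moreover have "integral {0..1} (\<lambda>t. f (R * EE t) * Pb t) = S"
    using GS by (simp add: Pb_def integral_unique)
  moreover have "integral {0..1} g = M / (2 * r^2) * Re c0" using gint by (rule integral_unique)
  moreover have "Re c0 \<le> (norm y0)^2 + (norm y1)^2 + (norm y2)^2 + (norm x0)^2 + (norm x1)^2 + (norm x2)^2"
  proof -
    have r2: "r^2 \<le> 1" "r^4 \<le> 1" using r by (simp_all add: power_le_one)
    have "Re c0 = (norm y0)^2 + (norm y1)^2 * r^2 + (norm y2)^2 * r^4 + (norm x0)^2 * r^4 + (norm x1)^2 * r^2 + (norm x2)^2"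
    proof -
      have h: "cnj z * z = of_real ((norm z)^2)" for z :: complex
        using complex_norm_square[of z] by (simp add: mult.commute)
      have "c0 = of_real ((norm y0)^2 + (norm y1)^2 * r^2 + (norm y2)^2 * r^4 + (norm x0)^2 * r^4 + (norm x1)^2 * r^2 + (norm x2)^2)"
        by (simp add: c0_def R_def h mult.assoc)
      then show ?thesis by simp
    qed
    also have "\<dots> \<le> (norm y0)^2 + (norm y1)^2 + (norm y2)^2 + (norm x0)^2 + (norm x1)^2 + (norm x2)^2"
      using r2 by (intro add_mono mult_left_le) simp_all
    finally show ?thesis .
  qed
  ultimately have "norm S \<le> M / (2 * r^2) * ((norm y0)^2 + (norm y1)^2 + (norm y2)^2 + (norm x0)^2 + (norm x1)^2 + (norm x2)^2)"
    using Mnn r by (smt (verit, best) divide_nonneg_nonneg mult_left_mono zero_le_power)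
  then show ?thesis by (simp add: S_def D0_def D1_def D2_def)
qed

lemma Fmv: "(fun_jordan3 f *v x)$0 = (deriv ^^ 0) f 0 * x$0 + (deriv ^^ 1) f 0 * x$1 + (deriv ^^ 2) f 0 / 2 * x$2"
  "(fun_jordan3 f *v x)$1 = (deriv ^^ 0) f 0 * x$1 + (deriv ^^ 1) f 0 * x$2"
  "(fun_jordan3 f *v x)$2 = (deriv ^^ 0) f 0 * x$2"
  by (simp_all add: matrix_vector_mult_def sum_3 three F_entries del: funpow.simps)

lemma normsq3: "(norm (x::complex^3))^2 = (norm (x$0))^2 + (norm (x$1))^2 + (norm (x$2))^2"
proof -
  have "(norm x)^2 = (\<Sum>i\<in>UNIV. (norm (x$i))^2)"
    unfolding norm_vec_def L2_set_def by (simp add: sum_nonneg)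
  then show ?thesis by (simp add: sum_3 three add_ac)
qed

lemma vec_bound:
  fixes F :: "complex^3^3"
  assumes H: "\<And>x y. norm (\<Sum>i\<in>UNIV. cnj (y$i) * (F *v x)$i) \<le> C / 2 * ((norm y)^2 + (norm x)^2)"
  shows "norm (F *v x) \<le> C * norm x"
proof (cases "F *v x = 0")
  case True
  have "0 \<le> C / 2 * (norm x)^2"
    using H[where x=x and y=0] by simp
  then have "0 \<le> C \<or> x = 0" by (auto simp: zero_le_mult_iff)
  then show ?thesis using True by auto
next
  case False
  define v where "v = F *v x"
  have vnz: "norm v > 0" using False by (simp add: v_def)
  have xnz: "x \<noteq> 0" using False by auto
  define s where "s = norm x / norm v"
  have spos: "s > 0" using vnz xnz by (simp add: s_def)
  define y where "y = s *\<^sub>R v"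
  have h: "cnj z * z = of_real ((norm z)^2)" for z :: complex
    using complex_norm_square[of z] by (simp add: mult.commute)
  have "(\<Sum>i\<in>UNIV. cnj (y$i) * v$i) = of_real s * (\<Sum>i\<in>UNIV. cnj (v$i) * v$i)"
  proof -
    have yi: "y$i = of_real s * v$i" for i
      unfolding y_def vector_scaleR_component by (simp add: scaleR_conv_of_real)
    show ?thesis by (simp add: yi sum_distrib_left mult_ac)
  qed
  also have "(\<Sum>i\<in>UNIV. cnj (v$i) * v$i) = of_real ((norm v)^2)"
    by (simp add: h sum_3 three normsq3[of v] add_ac)
  finally have "norm (\<Sum>i\<in>UNIV. cnj (y$i) * v$i) = s * (norm v)^2"
    using spos by (simp add: norm_mult norm_power)
  also have "s * (norm v)^2 = norm x * norm v" using vnz by (simp add: s_def power2_eq_square)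
  finally have "norm x * norm v \<le> C / 2 * ((norm y)^2 + (norm x)^2)"
    using H[where x=x and y=y] by (simp add: v_def)
  also have "norm y = norm x" using spos vnz by (simp add: y_def s_def)
  finally have "norm x * norm v \<le> norm x * (C * norm x)" by (simp add: power2_eq_square field_simps)
  then show ?thesis using xnz by (simp add: v_def)
qed

lemma upper_bound:
  assumes r: "0 < r" "r \<le> 1" and hol: "f holomorphic_on ball 0 r" and cont: "continuous_on (cball 0 r) f"
    and nz: "\<exists>z\<in>ball 0 r. f z \<noteq> 0"
  shows "mat_norm2 (fun_jordan3 f) / sup_norm f (ball 0 r) \<le> 1 / r^2"
proof -
  define M where "M = sup_norm f (ball 0 r)"
  have "compact (f ` cball 0 r)" by (rule compact_continuous_image[OF cont compact_cball])
  then obtain K where K: "\<And>z. z \<in> f ` cball 0 r \<Longrightarrow> norm z \<le> K"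
    using compact_imp_bounded bounded_iff by metis
  have bdd: "bdd_above ((\<lambda>z. norm (f z)) ` ball 0 r)"
    by (rule bdd_aboveI[of _ K]) (use K in auto)
  have Mb: "norm (f w) \<le> M" if "w \<in> ball 0 r" for w
    unfolding M_def sup_norm_def by (rule cSUP_upper[OF that bdd])
  have Mc: "norm (f w) \<le> M" if "w \<in> cball 0 r" for w
    by (rule continuous_on_closure_norm_le[of "ball 0 r" f M w]) (use cont Mb that r in auto)
  obtain z where z: "z \<in> ball 0 r" "f z \<noteq> 0" using nz by blast
  have Mpos: "M > 0" using Mb[OF z(1)] z(2) by (smt (verit) zero_less_norm_iff)
  define F where "F = fun_jordan3 f"
  have key: "norm (\<Sum>i\<in>UNIV. cnj (y$i) * (F *v x)$i) \<le> (M / r^2) / 2 * ((norm y)^2 + (norm x)^2)" for x y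
  proof -
    have "(\<Sum>i\<in>UNIV. cnj (y$i) * (F *v x)$i) =
       cnj (y$0) * ((deriv ^^ 0) f 0 * x$0 + (deriv ^^ 1) f 0 * x$1 + (deriv ^^ 2) f 0 / 2 * x$2)
             + cnj (y$1) * ((deriv ^^ 0) f 0 * x$1 + (deriv ^^ 1) f 0 * x$2) + cnj (y$2) * ((deriv ^^ 0) f 0 * x$2)"
      unfolding F_def by (simp only: sum_3 three Fmv) (simp only: add_ac)
    then show ?thesis
      using key_bound[OF cont hol r Mc, of "y$0" "x$0" "x$1" "x$2" "y$1" "y$2"]
      by (simp add: normsq3 add_ac del: funpow.simps)
  qed
  have "mat_norm2 F \<le> M / r^2"
    unfolding mat_norm2_def by (rule onorm_le) (rule vec_bound[OF key])
  then have "mat_norm2 F / M \<le> (M / r^2) / M" using Mpos by (intro divide_right_mono) auto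
  also have "\<dots> = 1 / r^2" using Mpos by simp
  finally show ?thesis by (simp add: F_def M_def)
qed

lemma witness:
  assumes r: "0 < r" "r \<le> 1"
  shows "mat_norm2 (fun_jordan3 (\<lambda>z. z^2)) / sup_norm (\<lambda>z. z^2) (ball 0 r) = 1 / r^2"
proof -
  define f :: "complex \<Rightarrow> complex" where "f = (\<lambda>z. z^2)"
  have d1: "deriv f = (\<lambda>z. 2 * z)"
  proof
    fix z :: complex
    have "(f has_field_derivative 2 * z) (at z)" unfolding f_def by (auto intro!: derivative_eq_intros)
    then show "deriv f z = 2 * z" by (rule DERIV_imp_deriv)
  qed
  have d2: "deriv (\<lambda>z::complex. 2 * z) = (\<lambda>z. 2)"
  proof
    fix z :: complex
    have "((\<lambda>z::complex. 2 * z) has_field_derivative 2) (at z)" by (auto intro!: derivative_eq_intros)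
    then show "deriv (\<lambda>z::complex. 2 * z) z = 2" by (rule DERIV_imp_deriv)
  qed
  have D: "(deriv ^^ 0) f 0 = 0" "(deriv ^^ 1) f 0 = 0" "(deriv ^^ 2) f 0 = 2"
    by (simp_all add: f_def[symmetric] d1 d2 numeral_2_eq_2) (simp add: f_def)
  have Fx: "(fun_jordan3 f *v x)$0 = x$2" "(fun_jordan3 f *v x)$1 = 0" "(fun_jordan3 f *v x)$2 = 0" for x
    by (simp_all only: Fmv D) simp_all
  have N1: "mat_norm2 (fun_jordan3 f) = 1"
  proof (rule antisym)
    show "mat_norm2 (fun_jordan3 f) \<le> 1"
      unfolding mat_norm2_def
    proof (rule onorm_le)
      fix x :: "complex^3"
      have "(norm (fun_jordan3 f *v x))^2 = (norm (x$2))^2" by (simp add: normsq3 Fx)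
      then have "norm (fun_jordan3 f *v x) = norm (x$2)" by simp
      also have "\<dots> \<le> norm x" by (rule Finite_Cartesian_Product.norm_nth_le)
      finally show "norm (fun_jordan3 f *v x) \<le> 1 * norm x" by simp
    qed
  next
    define x :: "complex^3" where "x = (\<chi> i. if i = 2 then 1 else 0)"
    have x2: "x$2 = 1" "x$0 = 0" "x$1 = 0" by (simp_all add: x_def)
    have n1: "(norm x)^2 = 1" by (simp add: normsq3 x2)
    have nx: "norm x = 1" using n1 norm_ge_zero[of x] by (simp add: power2_eq_1_iff)
    have "1 = norm ((fun_jordan3 f *v x)$0)" by (simp add: Fx x2)
    also have "\<dots> \<le> norm (fun_jordan3 f *v x)" by (rule Finite_Cartesian_Product.norm_nth_le)
    also have "\<dots> \<le> onorm (\<lambda>x. fun_jordan3 f *v x) * norm x"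
      by (rule onorm) simp
    finally show "1 \<le> mat_norm2 (fun_jordan3 f)" by (simp add: mat_norm2_def nx)
  qed
  have S: "sup_norm f (ball 0 r) = r^2"
  proof -
    have ne: "ball (0::complex) r \<noteq> {}" using r by simp
    have up: "norm (f z) \<le> r^2" if "z \<in> ball 0 r" for z
      using that r by (simp add: f_def norm_power power_mono less_imp_le)
    have bdd: "bdd_above ((\<lambda>z. norm (f z)) ` ball 0 r)" using up by (auto intro!: bdd_aboveI)
    define Sv where "Sv = (SUP z\<in>ball 0 r. norm (f z))"
    have le: "Sv \<le> r^2" unfolding Sv_def by (rule cSUP_least[OF ne up])
    have ge: "t^2 \<le> Sv" if "0 \<le> t" "t < r" for t
    proof -
      have "complex_of_real t \<in> ball 0 r" using that by simp
      from cSUP_upper[OF this bdd] show ?thesis using that by (simp add: Sv_def f_def norm_power)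
    qed
    have "r^2 \<le> Sv"
    proof (rule ccontr)
      assume "\<not> r^2 \<le> Sv"
      then have lt: "Sv < r^2" by simp
      have S0: "0 \<le> Sv" using ge[of 0] r by simp
      obtain q where q: "q = sqrt Sv" by blast
      define t where "t = (q + r) / 2"
      have "sqrt Sv < sqrt (r^2)" using lt by (rule real_sqrt_less_mono)
      then have "q < r" using r q by simp
      moreover have "0 \<le> q" using S0 q by simp
      ultimately have hh: "q < r" "0 \<le> q" by auto
      have t1: "0 \<le> t" using hh unfolding t_def by (simp add: field_simps)
      have t2: "t < r" using hh unfolding t_def by (simp add: field_simps)
      have t3: "sqrt Sv < t" using hh unfolding t_def q[symmetric] by (simp add: field_simps)
      note t = t1 t2 t3
      have "(sqrt Sv)^2 < t^2" by (rule power_strict_mono) (use t S0 in auto)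
      then have "Sv < t^2" using S0 by simp
      with ge[OF t(1,2)] show False by simp
    qed
    with le show ?thesis by (simp add: sup_norm_def Sv_def)
  qed
  show ?thesis using N1 S by (simp add: f_def)
qed

theorem theorem3:
  fixes r :: real
  assumes "0 < r" and "r \<le> 1"
  shows "(\<forall>f. f holomorphic_on ball 0 r \<and> continuous_on (cball 0 r) f \<and>
              (\<exists>z\<in>ball 0 r. f z \<noteq> 0) \<longrightarrow>
              mat_norm2 (fun_jordan3 f) / sup_norm f (ball 0 r) \<le> 2 + delta r)
       \<and> (\<exists>f. f holomorphic_on ball 0 r \<and> continuous_on (cball 0 r) f \<and>
              (\<exists>z\<in>ball 0 r. f z \<noteq> 0) \<and>
              mat_norm2 (fun_jordan3 f) / sup_norm f (ball 0 r) = 2 + delta r)"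
proof
  have dv: "2 + delta r = 1 / r^2" using delta_val[OF assms] by simp
  show "\<forall>f. f holomorphic_on ball 0 r \<and> continuous_on (cball 0 r) f \<and>
              (\<exists>z\<in>ball 0 r. f z \<noteq> 0) \<longrightarrow>
              mat_norm2 (fun_jordan3 f) / sup_norm f (ball 0 r) \<le> 2 + delta r"
  proof (intro allI impI)
    fix f :: "complex \<Rightarrow> complex"
    assume H: "f holomorphic_on ball 0 r \<and> continuous_on (cball 0 r) f \<and> (\<exists>z\<in>ball 0 r. f z \<noteq> 0)"
    have "mat_norm2 (fun_jordan3 f) / sup_norm f (ball 0 r) \<le> 1 / r^2"
    proof -
      from H have h1: "f holomorphic_on ball 0 r" and h2: "continuous_on (cball 0 r) f"
        and h3: "\<exists>z\<in>ball 0 r. f z \<noteq> 0" by blast+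
      show ?thesis by (rule upper_bound[OF assms h1 h2 h3])
    qed
    then show "mat_norm2 (fun_jordan3 f) / sup_norm f (ball 0 r) \<le> 2 + delta r" unfolding dv .
  qed
  show "\<exists>f. f holomorphic_on ball 0 r \<and> continuous_on (cball 0 r) f \<and>
              (\<exists>z\<in>ball 0 r. f z \<noteq> 0) \<and>
              mat_norm2 (fun_jordan3 f) / sup_norm f (ball 0 r) = 2 + delta r"
  proof (rule exI[of _ "\<lambda>z::complex. z^2"], intro conjI)
    show "(\<lambda>z::complex. z^2) holomorphic_on ball 0 r" by (intro holomorphic_on_power holomorphic_on_ident)
    show "continuous_on (cball 0 r) (\<lambda>z::complex. z^2)" by (intro continuous_on_power continuous_on_id)
    show "\<exists>z\<in>ball 0 r. (\<lambda>z::complex. z^2) z \<noteq> 0"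
    proof (rule bexI[of _ "of_real (r/2)"])
      show "complex_of_real (r/2) \<in> ball 0 r" using assms by simp
      show "(\<lambda>z::complex. z^2) (complex_of_real (r/2)) \<noteq> 0" using assms by simp
    qed
    show "mat_norm2 (fun_jordan3 (\<lambda>z. z^2)) / sup_norm (\<lambda>z. z^2) (ball 0 r) = 2 + delta r"
      unfolding dv by (rule witness[OF assms])
  qed
qed

end
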